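(* Let $G$ be a connected graph with $m$ edges whose normalized Laplacian spectrum is $\{[\alpha]^{m_1},[\beta]^{m_2},[0]^1\}$ with $2\geq\alpha>\beta>0$ (i.e. $G$ has exactly the three distinct normalized Laplacian eigenvalues $\alpha,\beta,0$, with $0$ simple). Then $\beta\leq 1$, and one of the following holds: (i) $\beta=1$, and every pair of non-adjacent vertices of $G$ have the same neighborhood; (ii) $\beta<1$, and for any two non-adjacent vertices $u,v$ of $G$, $$-\frac{2m(\alpha-1)(\beta-1)}{\alpha\beta}\geq d_u-d_v\geq \frac{2m(\alpha-1)(\beta-1)}{\alpha\beta}.$$
   Context: $d_u$ denotes the degree of vertex $u$. For a graph with adjacency matrix $A$ and diagonal degree matrix $D$ (no isolated vertices), the normalized Laplacian is $\mathcal{L}=I-D^{-1/2}AD^{-1/2}$; its eigenvalues (with multiplicities) form the normalized Laplacian spectrum, written $\{[\lambda_1]^{m_1},\ldots,[\lambda_t]^{m_t}\}$. *)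

theory Defs
  imports "Jordan_Normal_Form.Char_Poly"
begin

definition simple_graph :: "nat \<Rightarrow> (nat \<Rightarrow> nat \<Rightarrow> bool) \<Rightarrow> bool" where
  "simple_graph n E \<longleftrightarrow> (\<forall>u v. E u v \<longrightarrow> u < n \<and> v < n) \<and>
     (\<forall>u v. E u v \<longrightarrow> E v u) \<and> (\<forall>u. \<not> E u u)"

definition connected_graph :: "nat \<Rightarrow> (nat \<Rightarrow> nat \<Rightarrow> bool) \<Rightarrow> bool" where
  "connected_graph n E \<longleftrightarrow> n \<ge> 1 \<and>
     (\<forall>u<n. \<forall>v<n. (u, v) \<in> {(x, y). x < n \<and> y < n \<and> E x y}\<^sup>*)"

definition nbhd :: "nat \<Rightarrow> (nat \<Rightarrow> nat \<Rightarrow> bool) \<Rightarrow> nat \<Rightarrow> nat set" where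
  "nbhd n E u = {w. w < n \<and> E u w}"

definition degree :: "nat \<Rightarrow> (nat \<Rightarrow> nat \<Rightarrow> bool) \<Rightarrow> nat \<Rightarrow> nat" where
  "degree n E u = card (nbhd n E u)"

definition num_edges :: "nat \<Rightarrow> (nat \<Rightarrow> nat \<Rightarrow> bool) \<Rightarrow> nat" where
  "num_edges n E = card {(u, v). u < v \<and> v < n \<and> E u v}"

definition adj_matrix :: "nat \<Rightarrow> (nat \<Rightarrow> nat \<Rightarrow> bool) \<Rightarrow> real mat" where
  "adj_matrix n E = mat n n (\<lambda>(i, j). if E i j then 1 else 0)"

definition deg_inv_sqrt_matrix :: "nat \<Rightarrow> (nat \<Rightarrow> nat \<Rightarrow> bool) \<Rightarrow> real mat" where
  "deg_inv_sqrt_matrix n E =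
     mat n n (\<lambda>(i, j). if i = j then 1 / sqrt (real (degree n E i)) else 0)"

definition norm_laplacian :: "nat \<Rightarrow> (nat \<Rightarrow> nat \<Rightarrow> bool) \<Rightarrow> real mat" where
  "norm_laplacian n E =
     1\<^sub>m n - deg_inv_sqrt_matrix n E * adj_matrix n E * deg_inv_sqrt_matrix n E"

definition eig_mult :: "real mat \<Rightarrow> real \<Rightarrow> nat" where
  "eig_mult A x = order x (char_poly A)"

end

theory Submission
  imports Defs "Jordan_Normal_Form.Jordan_Normal_Form_Uniqueness" "Jordan_Normal_Form.Jordan_Normal_Form_Existence"
begin


lemma sum_list_eq_pointwise:
  fixes f g :: "'a \<Rightarrow> nat"
  assumes "\<forall>x\<in>set xs. g x \<le> f x" "sum_list (map f xs) = sum_list (map g xs)"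
  shows "\<forall>x\<in>set xs. f x = g x"
  using assms
proof (induct xs)
  case Nil then show ?case by simp
next
  case (Cons a xs)
  have "sum_list (map g xs) \<le> sum_list (map f xs)"
    using Cons.prems(1) by (intro sum_list_mono) auto
  with Cons.prems have "f a = g a" "sum_list (map f xs) = sum_list (map g xs)" by auto
  with Cons show ?case by auto
qed

lemma sym_sq_kernel:
  fixes C :: "real mat"
  assumes C: "C \<in> carrier_mat n n" and sym: "\<And>i j. i<n \<Longrightarrow> j<n \<Longrightarrow> C$$(i,j) = C$$(j,i)"
   and v: "v \<in> carrier_vec n" and z: "C *\<^sub>v (C *\<^sub>v v) = 0\<^sub>v n"
  shows "C *\<^sub>v v = 0\<^sub>v n"
proof -
  define y where "y = C *\<^sub>v v"
  have y: "y \<in> carrier_vec n" using C v by (auto simp: y_def)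
  have "y \<bullet> y = (\<Sum>i<n. (\<Sum>j<n. C$$(i,j) * v$j) * y$i)"
    using C v y by (auto simp: scalar_prod_def y_def row_def intro!: sum.cong simp: lessThan_atLeast0)
  also have "\<dots> = (\<Sum>i<n. \<Sum>j<n. C$$(i,j) * v$j * y$i)" by (simp add: sum_distrib_right)
  also have "\<dots> = (\<Sum>j<n. \<Sum>i<n. C$$(i,j) * v$j * y$i)" by (rule sum.swap)
  also have "\<dots> = (\<Sum>j<n. v$j * (\<Sum>i<n. C$$(j,i) * y$i))"
    by (auto simp: sum_distrib_left sym mult_ac intro!: sum.cong)
  also have "\<dots> = 0"
  proof -
    have "\<And>j. j < n \<Longrightarrow> (\<Sum>i<n. C$$(j,i) * y$i) = 0"
    proof -
      fix j assume j: "j < n"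
      have "(C *\<^sub>v y) $ j = 0" using z j by (simp add: y_def)
      then show "(\<Sum>i<n. C$$(j,i) * y$i) = 0"
        using C y j by (simp add: scalar_prod_def row_def lessThan_atLeast0)
    qed
    then show ?thesis by simp
  qed
  finally have "y \<bullet> y = 0" .
  then have "y = 0\<^sub>v n" using conjugate_square_eq_0_vec[OF y] by simp
  then show ?thesis by (simp add: y_def)
qed

lemma sym_complex_ev_real:
  fixes A :: "real mat"
  assumes A: "A \<in> carrier_mat n n" and sym: "\<And>i j. i<n \<Longrightarrow> j<n \<Longrightarrow> A$$(i,j) = A$$(j,i)"
    and ev: "eigenvalue (map_mat complex_of_real A) a"
  shows "a = complex_of_real (Re a)"
proof -
  obtain v where v: "v \<in> carrier_vec n" "v \<noteq> 0\<^sub>v n"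
    and Av: "map_mat complex_of_real A *\<^sub>v v = a \<cdot>\<^sub>v v"
    using ev A unfolding eigenvalue_def eigenvector_def by auto
  have Avi: "\<And>i. i < n \<Longrightarrow> (\<Sum>j<n. complex_of_real (A$$(i,j)) * v$j) = a * v$i"
  proof -
    fix i assume i: "i < n"
    have "(map_mat complex_of_real A *\<^sub>v v) $ i = a * v$i" using Av i v by simp
    then show "(\<Sum>j<n. complex_of_real (A$$(i,j)) * v$j) = a * v$i"
      using A v i by (simp add: scalar_prod_def row_def lessThan_atLeast0)
  qed
  define q where "q = (\<Sum>i<n. cnj (v$i) * (\<Sum>j<n. complex_of_real (A$$(i,j)) * v$j))"
  define r where "r = (\<Sum>i<n. cnj (v$i) * v$i)"
  have qr: "q = a * r" unfolding q_def r_def using Avi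
    by (simp add: sum_distrib_left mult_ac)
  have "cnj q = (\<Sum>i<n. v$i * (\<Sum>j<n. complex_of_real (A$$(i,j)) * cnj (v$j)))"
    unfolding q_def by (simp add: cnj_sum)
  also have "\<dots> = (\<Sum>i<n. \<Sum>j<n. v$i * complex_of_real (A$$(i,j)) * cnj (v$j))" by (simp add: sum_distrib_left mult_ac)
  also have "\<dots> = (\<Sum>j<n. \<Sum>i<n. v$i * complex_of_real (A$$(i,j)) * cnj (v$j))" by (rule sum.swap)
  also have "\<dots> = (\<Sum>j<n. cnj (v$j) * (\<Sum>i<n. complex_of_real (A$$(j,i)) * v$i))"
    by (auto simp: sum_distrib_left sym mult_ac intro!: sum.cong)
  also have "\<dots> = q" unfolding q_def ..
  finally have cq: "cnj q = q" .
  have rr: "r = complex_of_real (\<Sum>i<n. (cmod (v$i))^2)"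
    unfolding r_def of_real_sum by (rule sum.cong[OF refl]) (simp only: complex_norm_square mult.commute)
  obtain i where i: "i < n" "v$i \<noteq> 0" using v by (auto simp: vec_eq_iff)
  have "(\<Sum>i<n. (cmod (v$i))^2) > 0"
  proof -
    have "(cmod (v$i))^2 \<le> (\<Sum>i<n. (cmod (v$i))^2)"
      using i by (intro member_le_sum) auto
    moreover have "(cmod (v$i))^2 > 0" using i by simp
    ultimately show ?thesis by linarith
  qed
  then have r0: "r \<noteq> 0" unfolding rr by (metis of_real_eq_0_iff less_irrefl)
  have cr: "cnj r = r" by (simp only: rr complex_cnj_complex_of_real)
  have "cnj a * r = a * r" using cq qr cr by (metis complex_cnj_mult)
  then have "cnj a = a" using r0 by simp
  then show ?thesis by (metis Reals_cnj_iff complex_is_Real_iff complex_eq_iff Re_complex_of_real Im_complex_of_real)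
qed

interpretation rp: map_poly_comm_ring_hom "complex_of_real" ..

lemma sym_char_poly_split:
  fixes A :: "real mat"
  assumes A: "A \<in> carrier_mat n n" and sym: "\<And>i j. i<n \<Longrightarrow> j<n \<Longrightarrow> A$$(i,j) = A$$(j,i)"
  shows "\<exists>es. char_poly A = (\<Prod>e\<leftarrow>es. [:-e,1:])"
proof -
  let ?Ac = "map_mat complex_of_real A"
  have Ac: "?Ac \<in> carrier_mat n n" using A by simp
  obtain as where cp: "char_poly ?Ac = (\<Prod>a\<leftarrow>as. [:-a,1:])" using char_poly_factorized[OF Ac] by blast
  have re: "a = complex_of_real (Re a)" if a: "a \<in> set as" for a
  proof -
    have "poly (char_poly ?Ac) a = 0" unfolding cp using a by (simp add: poly_prod_list_zero_iff)
    then have "eigenvalue ?Ac a" using eigenvalue_root_char_poly[OF Ac] by simp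
    then show "a = complex_of_real (Re a)" using sym_complex_ev_real[OF A sym] by blast
  qed
  have hom: "map_poly complex_of_real (\<Prod>e\<leftarrow>es. [:-e,1:]) = (\<Prod>e\<leftarrow>es. [:-complex_of_real e,1:])" for es
  proof (induct es)
    case (Cons e es)
    have "map_poly complex_of_real [:-e,1:] = [:-complex_of_real e,1:]" by simp
    then show ?case using Cons by (simp only: list.map prod_list.Cons rp.hom_mult)
  qed simp
  have mapeq: "map (\<lambda>a. [:-a,1:]) as = map (\<lambda>a. [:-complex_of_real (Re a),1:]) as"
  proof (rule map_cong[OF refl])
    fix a assume "a \<in> set as"
    show "[:-a,1:] = [:-complex_of_real (Re a),1:]" using arg_cong[OF re[OF \<open>a \<in> set as\<close>], of "\<lambda>x. [:-x,1:]"] .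
  qed
  have m2: "map (\<lambda>a. [:-complex_of_real (Re a),1:]) as = map (\<lambda>e. [:-complex_of_real e,1:]) (map Re as)" by simp
  have "(\<Prod>a\<leftarrow>as. [:-a,1:]) = (\<Prod>e\<leftarrow>map Re as. [:-complex_of_real e,1:])"
    by (simp only: mapeq m2)
  have "map_poly complex_of_real (char_poly A) = char_poly ?Ac" by (rule of_real_hom.char_poly_hom[OF A, symmetric])
  also have "\<dots> = (\<Prod>a\<leftarrow>as. [:-a,1:])" by (rule cp)
  also have "\<dots> = (\<Prod>e\<leftarrow>map Re as. [:-complex_of_real e,1:])" by fact
  also have "\<dots> = map_poly complex_of_real (\<Prod>e\<leftarrow>map Re as. [:-e,1:])" by (rule hom[symmetric])
  finally have "map_poly complex_of_real (char_poly A) = map_poly complex_of_real (\<Prod>e\<leftarrow>map Re as. [:-e,1:])" .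
  then have "char_poly A = (\<Prod>e\<leftarrow>map Re as. [:-e,1:])"
    by (simp add: poly_eq_iff coeff_map_poly)
  then show ?thesis by blast
qed

lemma diag_mat_mult:
  fixes f g :: "nat \<Rightarrow> 'a :: comm_ring_1"
  shows "mat m m (\<lambda>(i,j). if i = j then f i else 0) * mat m m (\<lambda>(i,j). if i = j then g i else 0)
    = mat m m (\<lambda>(i,j). if i = j then f i * g i else 0)"
proof (rule eq_matI)
  fix i j assume i: "i < dim_row (mat m m (\<lambda>(i,j). if i = j then f i * g i else 0))"
    and j: "j < dim_col (mat m m (\<lambda>(i,j). if i = j then f i * g i else 0))"
  then have i: "i < m" and j: "j < m" by auto
  have "(\<Sum>k\<in>{0..<m}. (if i = k then f i else 0) * (if k = j then g k else 0))
      = (\<Sum>k\<in>{0..<m}. if k = i then (if i = j then f i * g i else 0) else 0)"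
    by (rule sum.cong) auto
  also have "\<dots> = (if i = j then f i * g i else 0)" using i by simp
  finally show "(mat m m (\<lambda>(i,j). if i = j then f i else 0) * mat m m (\<lambda>(i,j). if i = j then g i else 0)) $$ (i, j)
     = mat m m (\<lambda>(i,j). if i = j then f i * g i else 0) $$ (i, j)"
    using i j by (simp add: scalar_prod_def row_def col_def)
qed auto

lemma jordan_matrix_ones:
  assumes "\<forall>(k,e)\<in>set n_as. k = 1"
  shows "jordan_matrix n_as = mat (length n_as) (length n_as) (\<lambda>(i,j). if i = j then snd (n_as ! i) else 0)"
  using assms
proof (induct n_as)
  case Nil
  show ?case unfolding jordan_matrix_def by (rule eq_matI) auto
next
  case (Cons p rest)
  obtain e where p: "p = (1, e)" using Cons.prems by (cases p) auto
  have IH: "jordan_matrix rest = mat (length rest) (length rest) (\<lambda>(i,j). if i = j then snd (rest ! i) else 0)"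
    using Cons by auto
  have JM: "jordan_matrix (p # rest) = four_block_mat (jordan_block 1 e) (0\<^sub>m 1 (length rest)) (0\<^sub>m (length rest) 1) (jordan_matrix rest)"
    unfolding p jordan_matrix_def by (simp add: Let_def jordan_matrix_def[symmetric] IH)
  show ?case unfolding JM IH
    by (rule eq_matI) (auto simp: p jordan_block_def nth_Cons')
qed

lemma conj3:
  fixes P Q X Y Z :: "'a :: comm_ring_1 mat"
  assumes P: "P \<in> carrier_mat n n" and Q: "Q \<in> carrier_mat n n" and X: "X \<in> carrier_mat n n"
    and Y: "Y \<in> carrier_mat n n" and Z: "Z \<in> carrier_mat n n" and QP: "Q * P = 1\<^sub>m n"
  shows "P * X * Q * (P * Y * Q * (P * Z * Q)) = P * (X * (Y * Z)) * Q"
proof -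
  have two: "P * U * Q * (P * V * Q) = P * (U * V) * Q" if U: "U \<in> carrier_mat n n" and V: "V \<in> carrier_mat n n" for U V
  proof -
    have "P * U * Q * (P * V * Q) = P * U * (Q * (P * V * Q))"
      using P U Q V by (intro assoc_mult_mat) auto
    also have "Q * (P * V * Q) = V * Q"
    proof -
      have e1: "P * V * Q = P * (V * Q)" by (rule assoc_mult_mat[OF P V Q])
      have e2: "Q * P * (V * Q) = Q * (P * (V * Q))" using Q P V by (intro assoc_mult_mat) auto
      show ?thesis using e1 e2 QP V Q by simp
    qed
    also have "P * U * (V * Q) = P * (U * V) * Q"
    proof -
      have e1: "P * U * (V * Q) = P * (U * (V * Q))" using P U V Q by (intro assoc_mult_mat) auto
      have e2: "U * (V * Q) = U * V * Q" using U V Q by (intro assoc_mult_mat[symmetric]) auto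
      have e3: "P * (U * V * Q) = P * (U * V) * Q" using P U V Q by (intro assoc_mult_mat[symmetric]) auto
      show ?thesis using e1 e2 e3 by simp
    qed
    finally show ?thesis .
  qed
  show ?thesis using two[OF Y Z] two[OF X, of "Y * Z"] Y Z by simp
qed

lemma sym_poly_zero:
  fixes A :: "real mat"
  assumes A: "A \<in> carrier_mat n n" and sym: "\<And>i j. i<n \<Longrightarrow> j<n \<Longrightarrow> A$$(i,j) = A$$(j,i)"
    and evs: "\<And>e. eigenvalue A e \<Longrightarrow> e = a \<or> e = b \<or> e = c"
  shows "char_matrix A a * (char_matrix A b * char_matrix A c) = 0\<^sub>m n n"
proof -
  obtain es where cp: "char_poly A = (\<Prod>e\<leftarrow>es. [:-e,1:])" using sym_char_poly_split[OF A sym] by blast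
  obtain n_as where jnf: "jordan_nf A n_as" using jordan_nf_exists[OF A cp] by blast
  then obtain P Q where wit: "similar_mat_wit A (jordan_matrix n_as) P Q" and pos: "0 \<notin> fst ` set n_as"
    unfolding jordan_nf_def similar_mat_def by blast
  let ?J = "jordan_matrix n_as"
  note W = similar_mat_witD2[OF A wit]
  have kerEq: "mat_kernel (char_matrix A e ^\<^sub>m 2) = mat_kernel (char_matrix A e ^\<^sub>m 1)" for e
  proof -
    let ?C = "char_matrix A e"
    have C: "?C \<in> carrier_mat n n" using A by simp
    have Csym: "\<And>i j. i<n \<Longrightarrow> j<n \<Longrightarrow> ?C$$(i,j) = ?C$$(j,i)"
      using A sym by (auto simp: char_matrix_def)
    have p2: "?C ^\<^sub>m 2 = ?C * ?C" using C by (simp add: numeral_2_eq_2)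
    have p1: "?C ^\<^sub>m 1 = ?C" using C by simp
    have "\<forall>v. (v \<in> carrier_vec n \<and> ?C * ?C *\<^sub>v v = 0\<^sub>v n) = (v \<in> carrier_vec n \<and> ?C *\<^sub>v v = 0\<^sub>v n)"
    proof (intro allI iffI)
      fix v assume H: "v \<in> carrier_vec n \<and> ?C * ?C *\<^sub>v v = 0\<^sub>v n"
      then have v': "v \<in> carrier_vec n" by simp
      have "?C * ?C *\<^sub>v v = ?C *\<^sub>v (?C *\<^sub>v v)" by (rule assoc_mult_mat_vec[OF C C v'])
      then have "?C *\<^sub>v (?C *\<^sub>v v) = 0\<^sub>v n" using H by simp
      from sym_sq_kernel[OF C Csym v' this] v' show "v \<in> carrier_vec n \<and> ?C *\<^sub>v v = 0\<^sub>v n" by simp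
    next
      fix v assume H: "v \<in> carrier_vec n \<and> ?C *\<^sub>v v = 0\<^sub>v n"
      then have v': "v \<in> carrier_vec n" by simp
      have "?C * ?C *\<^sub>v v = ?C *\<^sub>v (?C *\<^sub>v v)" by (rule assoc_mult_mat_vec[OF C C v'])
      also have "\<dots> = 0\<^sub>v n" using H C by (auto intro!: eq_vecI simp: scalar_prod_def)
      finally show "v \<in> carrier_vec n \<and> ?C * ?C *\<^sub>v v = 0\<^sub>v n" using v' by simp
    qed
    then show ?thesis unfolding p1 p2 mat_kernel_def using C by simp
  qed
  have ones: "\<forall>(k,e)\<in>set n_as. k = 1"
  proof (clarify)
    fix k e assume ke: "(k, e) \<in> set n_as"
    have "dim_gen_eigenspace A e 2 = dim_gen_eigenspace A e 1"
      unfolding dim_gen_eigenspace_def kernel_dim_def using kerEq[of e] A by simp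
    then have "(\<Sum>k\<leftarrow>map fst [(k,e')\<leftarrow>n_as. e' = e]. min 2 k) = (\<Sum>k\<leftarrow>map fst [(k,e')\<leftarrow>n_as. e' = e]. min 1 k)"
      using dim_gen_eigenspace[OF jnf] by simp
    then have "\<forall>k\<in>set (map fst [(k,e')\<leftarrow>n_as. e' = e]). min 2 k = min 1 k"
      by (intro sum_list_eq_pointwise) auto
    moreover have "k \<in> set (map fst [(k,e')\<leftarrow>n_as. e' = e])" using ke by force
    moreover have "k \<noteq> 0" using pos ke by force
    ultimately show "k = 1" by fastforce
  qed
  define d where "d = (\<lambda>i. snd (n_as ! i))"
  define m where "m = length n_as"
  have Jd: "?J = mat m m (\<lambda>(i,j). if i = j then d i else 0)"
    unfolding d_def m_def by (rule jordan_matrix_ones[OF ones])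
  have mn: "m = n" using W(5) Jd by auto
  have dev: "d i = a \<or> d i = b \<or> d i = c" if i: "i < m" for i
  proof -
    have mem: "(fst (n_as ! i), d i) \<in> set n_as" using i unfolding d_def m_def by simp
    have "char_poly A = (\<Prod>(k, e)\<leftarrow>n_as. [:- e, 1:] ^ k)"
      using jordan_nf_char_poly[OF jnf] .
    then have "poly (char_poly A) (d i) = 0"
      using mem ones by (force simp: poly_prod_list_zero_iff)
    then have "eigenvalue A (d i)" using eigenvalue_root_char_poly[OF A] by simp
    then show ?thesis using evs by blast
  qed
  have cmJ: "char_matrix ?J x = mat m m (\<lambda>(i,j). if i = j then d i - x else 0)" for x
    unfolding Jd char_matrix_def by (rule eq_matI) auto
  have prodJ: "char_matrix ?J a * (char_matrix ?J b * char_matrix ?J c) = 0\<^sub>m n n"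
    unfolding cmJ diag_mat_mult mn[symmetric]
  proof (rule eq_matI)
    fix i j assume "i < dim_row (0\<^sub>m m m :: real mat)" "j < dim_col (0\<^sub>m m m :: real mat)"
    then have i: "i < m" and j: "j < m" by auto
    show "mat m m (\<lambda>(i, j). if i = j then (d i - a) * ((d i - b) * (d i - c)) else 0) $$ (i, j) = 0\<^sub>m m m $$ (i, j)"
      using i j dev[OF i] by auto
  qed auto
  have cmA: "char_matrix A x = P * char_matrix ?J x * Q" for x
    using similar_mat_witD(3)[OF refl similar_mat_wit_char_matrix[OF wit, of x]] .
  have cJ: "char_matrix ?J x \<in> carrier_mat n n" for x using W(5) by simp
  have "char_matrix A a * (char_matrix A b * char_matrix A c)
      = P * (char_matrix ?J a * (char_matrix ?J b * char_matrix ?J c)) * Q"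
    unfolding cmA by (rule conj3[OF W(6) W(7) cJ cJ cJ W(2)])
  also have "\<dots> = 0\<^sub>m n n" unfolding prodJ using W(6) W(7) by simp
  finally show ?thesis .
qed


definition sq :: "nat \<Rightarrow> (nat \<Rightarrow> nat \<Rightarrow> bool) \<Rightarrow> nat \<Rightarrow> real" where
  "sq n E i = sqrt (real (degree n E i))"

definition TT :: "nat \<Rightarrow> (nat \<Rightarrow> nat \<Rightarrow> bool) \<Rightarrow> nat \<Rightarrow> nat \<Rightarrow> real" where
  "TT n E i j = (\<Sum>k\<in>nbhd n E i. if E k j then 1 / real (degree n E k) else 0)"

lemma prod_entry:
  fixes A B :: "'a :: comm_ring_1 mat"
  assumes A: "A \<in> carrier_mat n n" and B: "B \<in> carrier_mat n n" and i: "i < n" and j: "j < n"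
  shows "(A * B) $$ (i,j) = (\<Sum>k<n. A $$ (i,k) * B $$ (k,j))"
  using A B i j by (simp add: scalar_prod_def row_def col_def lessThan_atLeast0)

lemma mult_vec_entry:
  fixes A :: "'a :: comm_ring_1 mat"
  assumes A: "A \<in> carrier_mat n n" and v: "v \<in> carrier_vec n" and i: "i < n"
  shows "(A *\<^sub>v v) $ i = (\<Sum>k<n. A $$ (i,k) * v $ k)"
  using A v i by (simp add: scalar_prod_def row_def lessThan_atLeast0)

lemma diag_left:
  fixes f :: "nat \<Rightarrow> 'a :: comm_ring_1"
  assumes M: "M \<in> carrier_mat n m" and i: "i < n" and j: "j < m"
  shows "(mat n n (\<lambda>(i,j). if i = j then f i else 0) * M) $$ (i,j) = f i * M $$ (i,j)"
proof -
  have "(mat n n (\<lambda>(i,j). if i = j then f i else 0) * M) $$ (i,j) = (\<Sum>k\<in>{0..<n}. (if i = k then f i else 0) * M $$ (k,j))"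
    using M i j by (simp add: scalar_prod_def row_def col_def)
  also have "\<dots> = (\<Sum>k\<in>{0..<n}. if k = i then f i * M $$ (i,j) else 0)" by (rule sum.cong) auto
  also have "\<dots> = f i * M $$ (i,j)" using i by simp
  finally show ?thesis .
qed

lemma diag_right:
  fixes f :: "nat \<Rightarrow> 'a :: comm_ring_1"
  assumes M: "M \<in> carrier_mat n m" and i: "i < n" and j: "j < m"
  shows "(M * mat m m (\<lambda>(i,j). if i = j then f i else 0)) $$ (i,j) = M $$ (i,j) * f j"
proof -
  have "(M * mat m m (\<lambda>(i,j). if i = j then f i else 0)) $$ (i,j) = (\<Sum>k\<in>{0..<m}. M $$ (i,k) * (if k = j then f k else 0))"
    using M i j by (simp add: scalar_prod_def row_def col_def)
  also have "\<dots> = (\<Sum>k\<in>{0..<m}. if k = j then M $$ (i,j) * f j else 0)" by (rule sum.cong) auto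
  also have "\<dots> = M $$ (i,j) * f j" using j by simp
  finally show ?thesis .
qed

lemma sq_sq: "sq n E i * sq n E i = real (degree n E i)"
  unfolding sq_def by simp

context
  fixes n :: nat and E :: "nat \<Rightarrow> nat \<Rightarrow> bool"
  assumes sg: "simple_graph n E"
begin

lemma E_bound: "E u v \<Longrightarrow> u < n \<and> v < n" using sg by (auto simp: simple_graph_def)
lemma E_sym: "E u v \<Longrightarrow> E v u" using sg by (auto simp: simple_graph_def)
lemma E_irr: "\<not> E u u" using sg by (auto simp: simple_graph_def)

lemma nbhd_fin: "finite (nbhd n E i)" unfolding nbhd_def by auto

lemma sum_nbhd: "(\<Sum>k<n. if E i k then f k else 0) = (\<Sum>k\<in>nbhd n E i. f k)"
proof -
  have eq: "nbhd n E i = {k \<in> {..<n}. E i k}" unfolding nbhd_def by auto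
  show ?thesis unfolding eq by (rule sum.inter_filter[symmetric]) simp
qed

lemma deg_pos_nb: "k \<in> nbhd n E i \<Longrightarrow> degree n E k > 0"
proof -
  assume k: "k \<in> nbhd n E i"
  then have "E k i" "i < n" using E_sym E_bound by (auto simp: nbhd_def)
  then have "i \<in> nbhd n E k" by (simp add: nbhd_def)
  then show ?thesis unfolding degree_def using nbhd_fin[of k] card_gt_0_iff by blast
qed

lemma L_carrier: "norm_laplacian n E \<in> carrier_mat n n"
  unfolding norm_laplacian_def deg_inv_sqrt_matrix_def adj_matrix_def by auto

lemma L_entry: assumes i: "i<n" and j: "j<n"
  shows "norm_laplacian n E $$ (i,j) = (if i = j then 1 else 0) - (if E i j then 1 / (sq n E i * sq n E j) else 0)"
proof -
  define D where "D = deg_inv_sqrt_matrix n E"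
  define A where "A = adj_matrix n E"
  have D: "D = mat n n (\<lambda>(i,j). if i = j then 1 / sq n E i else 0)" unfolding D_def deg_inv_sqrt_matrix_def sq_def ..
  have Ac: "A \<in> carrier_mat n n" unfolding A_def adj_matrix_def by simp
  have DA: "D * A \<in> carrier_mat n n" unfolding D using Ac by (intro mult_carrier_mat) auto
  have "(D * A * D) $$ (i,j) = (D * A) $$ (i,j) * (1 / sq n E j)"
    using diag_right[OF DA i j, of "\<lambda>i. 1 / sq n E i"] unfolding D by simp
  also have "(D * A) $$ (i,j) = 1 / sq n E i * A $$ (i,j)"
    using diag_left[OF Ac i j, of "\<lambda>i. 1 / sq n E i"] unfolding D by simp
  finally have DADe: "(D * A * D) $$ (i,j) = (if E i j then 1 / (sq n E i * sq n E j) else 0)"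
    using i j by (simp add: A_def adj_matrix_def)
  moreover have "D * A * D \<in> carrier_mat n n" using DA Ac unfolding D by (intro mult_carrier_mat) auto
  ultimately have "(1\<^sub>m n - D * A * D) $$ (i,j) = (1\<^sub>m n) $$ (i,j) - (D * A * D) $$ (i,j)"
    using i j by (intro index_minus_mat) auto
  then show ?thesis using i j DADe E_irr
    unfolding norm_laplacian_def D_def[symmetric] A_def[symmetric] by simp
qed

lemma L_sym: "i<n \<Longrightarrow> j<n \<Longrightarrow> norm_laplacian n E $$ (i,j) = norm_laplacian n E $$ (j,i)"
  by (auto simp: L_entry E_sym mult.commute)

lemma L_mult: assumes i: "i < n"
  shows "(\<Sum>k<n. norm_laplacian n E $$ (i,k) * x k) = x i - (\<Sum>k\<in>nbhd n E i. x k / (sq n E i * sq n E k))"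
proof -
  have "(\<Sum>k<n. norm_laplacian n E $$ (i,k) * x k)
      = (\<Sum>k<n. (if k = i then x i else 0) - (if E i k then x k / (sq n E i * sq n E k) else 0))"
    by (rule sum.cong) (auto simp: L_entry i E_irr)
  also have "\<dots> = (\<Sum>k<n. if k = i then x i else 0) - (\<Sum>k<n. if E i k then x k / (sq n E i * sq n E k) else 0)"
    by (simp add: sum_subtractf)
  also have "\<dots> = x i - (\<Sum>k\<in>nbhd n E i. x k / (sq n E i * sq n E k))"
    using i sum_nbhd by simp
  finally show ?thesis .
qed

lemma L2_entry: assumes i: "i < n" and j: "j < n"
  shows "(\<Sum>k<n. norm_laplacian n E $$ (i,k) * norm_laplacian n E $$ (k,j))
    = (if i = j then 1 else 0) - 2 * (if E i j then 1 / (sq n E i * sq n E j) else 0) + TT n E i j / (sq n E i * sq n E j)"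
proof -
  let ?L = "norm_laplacian n E"
  have "(\<Sum>k\<in>nbhd n E i. ?L $$ (k,j) / (sq n E i * sq n E k))
     = (\<Sum>k\<in>nbhd n E i. (if k = j then 1 / (sq n E i * sq n E j) else 0)
          - (if E k j then 1 / real (degree n E k) else 0) / (sq n E i * sq n E j))"
  proof (rule sum.cong[OF refl])
    fix k assume k: "k \<in> nbhd n E i"
    then have kn: "k < n" by (simp add: nbhd_def)
    have dk: "sq n E k * sq n E k = real (degree n E k)" by (rule sq_sq)
    have "sq n E k > 0" using deg_pos_nb[OF k] unfolding sq_def by simp
    then show "?L $$ (k,j) / (sq n E i * sq n E k) = (if k = j then 1 / (sq n E i * sq n E j) else 0)
          - (if E k j then 1 / real (degree n E k) else 0) / (sq n E i * sq n E j)"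
      using kn j dk[symmetric] by (auto simp: L_entry field_simps E_irr)
  qed
  also have "\<dots> = (\<Sum>k\<in>nbhd n E i. (if k = j then 1 / (sq n E i * sq n E j) else 0))
          - TT n E i j / (sq n E i * sq n E j)"
    unfolding TT_def by (simp add: sum_subtractf sum_divide_distrib)
  also have "(\<Sum>k\<in>nbhd n E i. (if k = j then 1 / (sq n E i * sq n E j) else 0)) = (if E i j then 1 / (sq n E i * sq n E j) else 0)"
    using nbhd_fin[of i] j by (simp add: nbhd_def)
  finally have X: "(\<Sum>k\<in>nbhd n E i. ?L $$ (k,j) / (sq n E i * sq n E k)) =
     (if E i j then 1 / (sq n E i * sq n E j) else 0) - TT n E i j / (sq n E i * sq n E j)" .
  show ?thesis using L_mult[OF i, of "\<lambda>k. ?L $$ (k,j)"] X L_entry[OF i j] by simp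
qed

lemma handshake_nat: "(\<Sum>i<n. degree n E i) = 2 * num_edges n E"
proof -
  define P where "P = {(i,j). i < n \<and> j < n \<and> E i j}"
  define P1 where "P1 = {(u,v). u < v \<and> v < n \<and> E u v}"
  define P2 where "P2 = {(u,v). v < u \<and> u < n \<and> E u v}"
  have fP: "finite P" unfolding P_def by (rule finite_subset[of _ "{..<n} \<times> {..<n}"]) auto
  have "P = Sigma {..<n} (nbhd n E)" unfolding P_def nbhd_def by auto
  then have cP: "card P = (\<Sum>i<n. degree n E i)" unfolding degree_def
    by (simp add: nbhd_fin)
  have PU: "P = P1 \<union> P2" unfolding P_def P1_def P2_def by (auto, metis E_irr nat_neq_iff)
  have dis: "P1 \<inter> P2 = {}" unfolding P1_def P2_def by auto
  have f1: "finite P1" "finite P2" using fP PU by auto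
  have P2i: "P2 = prod.swap ` P1" unfolding P1_def P2_def using E_sym by (auto simp: image_iff)
  have "card P2 = card P1" unfolding P2i by (rule card_image) simp
  moreover have "card P = card P1 + card P2" unfolding PU by (rule card_Un_disjoint[OF f1 dis])
  ultimately have "card P = 2 * card P1" by simp
  moreover have "num_edges n E = card P1" unfolding num_edges_def P1_def ..
  ultimately show ?thesis using cP by simp
qed

lemma handshake: "(\<Sum>i<n. real (degree n E i)) = 2 * real (num_edges n E)"
  using arg_cong[OF handshake_nat, of real] by simp

end


context
  fixes n :: nat and E :: "nat \<Rightarrow> nat \<Rightarrow> bool"
  assumes sg: "simple_graph n E" and con: "connected_graph n E" and n2: "n \<ge> 2"
begin

lemma deg_pos: assumes i: "i < n" shows "degree n E i > 0"
proof -
  define j where "j = (if i = 0 then 1 else 0::nat)"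
  have j: "j < n" "j \<noteq> i" using n2 i unfolding j_def by auto
  have "(i, j) \<in> {(x, y). x < n \<and> y < n \<and> E x y}\<^sup>*" using con i j unfolding connected_graph_def by blast
  then have "\<exists>w. (i, w) \<in> {(x, y). x < n \<and> y < n \<and> E x y}"
    using j(2) by (metis converse_rtranclE)
  then obtain w where "(i, w) \<in> {(x, y). x < n \<and> y < n \<and> E x y}" by blast
  then have "w \<in> nbhd n E i" by (auto simp: nbhd_def)
  then show ?thesis unfolding degree_def using nbhd_fin[OF sg, of i] card_gt_0_iff by blast
qed

lemma sq_pos: "i < n \<Longrightarrow> sq n E i > 0"
  by (simp add: sq_def deg_pos)

lemma Lw: assumes i: "i < n" shows "(\<Sum>k<n. norm_laplacian n E $$ (i,k) * sq n E k) = 0"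
proof -
  have "(\<Sum>k\<in>nbhd n E i. sq n E k / (sq n E i * sq n E k)) = (\<Sum>k\<in>nbhd n E i. 1 / sq n E i)"
  proof (rule sum.cong[OF refl])
    fix k assume "k \<in> nbhd n E i"
    then have "sq n E k > 0" using sq_pos by (simp add: nbhd_def)
    then show "sq n E k / (sq n E i * sq n E k) = 1 / sq n E i" by simp
  qed
  also have "\<dots> = real (degree n E i) / sq n E i" by (simp add: degree_def)
  also have "\<dots> = sq n E i" using sq_sq[of n E i] sq_pos[OF i] by (simp add: field_simps)
  finally show ?thesis using L_mult[OF sg i, of "sq n E"] by simp
qed

lemma kernel: assumes x: "\<forall>i<n. (\<Sum>k<n. norm_laplacian n E $$ (i,k) * x k) = 0"
  shows "\<exists>c. \<forall>i<n. x i = c * sq n E i"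
proof -
  define y where "y i = x i / sq n E i" for i
  have harm: "real (degree n E i) * y i = (\<Sum>k\<in>nbhd n E i. y k)" if i: "i < n" for i
  proof -
    have "x i = (\<Sum>k\<in>nbhd n E i. x k / (sq n E i * sq n E k))" using x L_mult[OF sg i, of x] i by simp
    also have "\<dots> = (\<Sum>k\<in>nbhd n E i. y k) / sq n E i"
      unfolding y_def sum_divide_distrib by (rule sum.cong[OF refl]) (simp add: mult.commute)
    finally have xi: "x i = (\<Sum>k\<in>nbhd n E i. y k) / sq n E i" .
    show ?thesis using sq_pos[OF i] sq_sq[of n E i] deg_pos[OF i] unfolding y_def xi by (simp add: field_simps)
  qed
  define mx where "mx = Max (y ` {..<n})"
  have "y 0 \<in> y ` {..<n}" using n2 by simp
  then have fin: "finite (y ` {..<n})" "y ` {..<n} \<noteq> {}" by auto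
  have le: "y i \<le> mx" if "i < n" for i unfolding mx_def using fin that by (intro Max_ge) auto
  obtain u0 where u0: "u0 < n" "y u0 = mx" using Max_in[OF fin] unfolding mx_def by auto
  have stp: "y k = mx" if a: "a < n" "y a = mx" "E a k" for a k
  proof -
    have "(\<Sum>j\<in>nbhd n E a. mx - y j) = real (degree n E a) * mx - (\<Sum>j\<in>nbhd n E a. y j)"
      by (simp add: sum_subtractf degree_def)
    also have "\<dots> = 0" using harm[OF a(1)] a(2) by simp
    finally have s0: "(\<Sum>j\<in>nbhd n E a. mx - y j) = 0" .
    have nn: "0 \<le> mx - y j" if "j \<in> nbhd n E a" for j using le that by (auto simp: nbhd_def)
    have "k \<in> nbhd n E a" using a(3) E_bound[OF sg] by (auto simp: nbhd_def)
    have "\<forall>j\<in>nbhd n E a. mx - y j = 0" using sum_nonneg_eq_0_iff[of "nbhd n E a" "\<lambda>j. mx - y j"] nbhd_fin[OF sg] nn s0 by blast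
    then have "mx - y k = 0" using \<open>k \<in> nbhd n E a\<close> by blast
    then show ?thesis by simp
  qed
  have all: "y i = mx" if i: "i < n" for i
  proof -
    have "(u0, i) \<in> {(x, y). x < n \<and> y < n \<and> E x y}\<^sup>*" using con u0 i unfolding connected_graph_def by blast
    then show ?thesis
    proof (induct rule: rtrancl_induct)
      case base then show ?case using u0 by simp
    next
      case (step a b) then show ?case using stp by auto
    qed
  qed
  show ?thesis
  proof (intro exI allI impI)
    fix i assume i: "i < n"
    have "x i / sq n E i = mx" using all[OF i] unfolding y_def .
    then show "x i = mx * sq n E i" using sq_pos[OF i] by (simp add: field_simps)
  qed
qed

lemma complete_ev:
  assumes comp: "\<forall>u<n. \<forall>v<n. u \<noteq> v \<longrightarrow> E u v"
    and ev: "eigenvalue (norm_laplacian n E) lam" and lam0: "lam \<noteq> 0"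
  shows "lam = 1 + 1 / (real n - 1)"
proof -
  let ?L = "norm_laplacian n E"
  obtain x where x: "x \<in> carrier_vec n" "x \<noteq> 0\<^sub>v n" and Lx: "?L *\<^sub>v x = lam \<cdot>\<^sub>v x"
    using ev L_carrier[OF sg] unfolding eigenvalue_def eigenvector_def by auto
  have Lxi: "(\<Sum>k<n. ?L $$ (i,k) * x $ k) = lam * x $ i" if i: "i<n" for i
    using arg_cong[OF Lx, of "\<lambda>v. v $ i"] mult_vec_entry[OF L_carrier[OF sg] x(1) i] x(1) i by simp
  have nb: "nbhd n E i = {..<n} - {i}" if "i < n" for i using comp E_irr[OF sg] that by (auto simp: nbhd_def)
  have deg: "degree n E i = n - 1" if "i<n" for i using nb[OF that] that by (simp add: degree_def)
  define s where "s = sqrt (real n - 1)"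
  have sqi: "sq n E i = s" if "i<n" for i using deg[OF that] n2 by (simp add: sq_def s_def of_nat_diff)
  have s0: "s > 0" using n2 s_def by simp
  have ss: "s * s = real n - 1" using n2 s_def by simp
  have eqs: "(\<Sum>i<n. sq n E i * (\<Sum>k<n. ?L $$ (i,k) * x $ k)) = (\<Sum>i<n. sq n E i * (lam * x $ i))"
    by (rule sum.cong[OF refl]) (simp add: Lxi)
  have "lam * (\<Sum>i<n. sq n E i * x $ i) = (\<Sum>i<n. sq n E i * (\<Sum>k<n. ?L $$ (i,k) * x $ k))"
    unfolding eqs by (simp add: sum_distrib_left mult_ac)
  also have "\<dots> = (\<Sum>i<n. \<Sum>k<n. sq n E i * ?L $$ (i,k) * x $ k)" by (simp add: sum_distrib_left mult_ac)
  also have "\<dots> = (\<Sum>k<n. \<Sum>i<n. sq n E i * ?L $$ (i,k) * x $ k)" by (rule sum.swap)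
  also have "\<dots> = (\<Sum>k<n. x $ k * (\<Sum>i<n. ?L $$ (k,i) * sq n E i))"
    by (auto simp: sum_distrib_left L_sym[OF sg] mult_ac intro!: sum.cong)
  also have "\<dots> = 0" by (rule sum.neutral) (simp add: Lw)
  finally have "lam * (\<Sum>i<n. sq n E i * x $ i) = 0" .
  then have z1: "(\<Sum>i<n. sq n E i * x $ i) = 0" using lam0 by simp
  have "(\<Sum>i<n. sq n E i * x $ i) = (\<Sum>i<n. s * x $ i)" by (rule sum.cong[OF refl]) (simp add: sqi)
  then have sumzero: "(\<Sum>i<n. x $ i) = 0" using z1 s0 by (simp add: sum_distrib_left[symmetric])
  obtain u where u: "u < n" "x $ u \<noteq> 0" using x by (auto simp: vec_eq_iff)
  have e1: "lam * x $ u = x $ u - (\<Sum>k\<in>nbhd n E u. x $ k / (sq n E u * sq n E k))"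
    using Lxi[OF u(1)] L_mult[OF sg u(1), of "\<lambda>k. x $ k"] by simp
  have e2: "(\<Sum>k\<in>nbhd n E u. x $ k / (sq n E u * sq n E k)) = (\<Sum>k\<in>{..<n} - {u}. x $ k) / (real n - 1)"
    unfolding nb[OF u(1)] sum_divide_distrib ss[symmetric] by (rule sum.cong[OF refl]) (simp add: sqi u(1))
  have e3: "(\<Sum>k\<in>{..<n} - {u}. x $ k) = - x $ u" using sumzero u(1) by (simp add: sum_diff1)
  have "lam * x $ u = x $ u * (1 + 1 / (real n - 1))" using e1 e2 e3 by (simp add: field_simps)
  then show ?thesis using u(2) by simp
qed

end



theorem lemma2p4:
  fixes n :: nat and E :: "nat \<Rightarrow> nat \<Rightarrow> bool" and \<alpha> \<beta> :: real
  assumes "simple_graph n E"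
    and "connected_graph n E"
    and "{x. eigenvalue (norm_laplacian n E) x} = {\<alpha>, \<beta>, 0}"
    and "eig_mult (norm_laplacian n E) 0 = 1"
    and "2 \<ge> \<alpha>" and "\<alpha> > \<beta>" and "\<beta> > 0"
  shows "\<beta> \<le> 1 \<and>
    ((\<beta> = 1 \<and> (\<forall>u<n. \<forall>v<n. u \<noteq> v \<and> \<not> E u v \<longrightarrow> nbhd n E u = nbhd n E v)) \<or>
     (\<beta> < 1 \<and> (\<forall>u<n. \<forall>v<n. u \<noteq> v \<and> \<not> E u v \<longrightarrow>
        - (2 * real (num_edges n E) * (\<alpha> - 1) * (\<beta> - 1) / (\<alpha> * \<beta>))
          \<ge> real (degree n E u) - real (degree n E v) \<and>
        real (degree n E u) - real (degree n E v)
          \<ge> 2 * real (num_edges n E) * (\<alpha> - 1) * (\<beta> - 1) / (\<alpha> * \<beta>))))"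
proof -
  note sg = assms(1) and con = assms(2)
  let ?L = "norm_laplacian n E"
  have Lc: "?L \<in> carrier_mat n n" by (rule L_carrier[OF sg])
  have evs: "eigenvalue ?L x \<longleftrightarrow> x = \<alpha> \<or> x = \<beta> \<or> x = 0" for x
  proof -
    have "x \<in> {x. eigenvalue ?L x} \<longleftrightarrow> x \<in> {\<alpha>, \<beta>, 0}" using assms(3) by simp
    then show ?thesis by simp
  qed
  have n1: "n \<ge> 1" using con unfolding connected_graph_def by simp
  have n2: "n \<ge> 2"
  proof (rule ccontr)
    assume "\<not> n \<ge> 2" then have n: "n = 1" using n1 by simp
    have "eigenvalue ?L 0" using evs by simp
    then obtain v where v: "v \<in> carrier_vec n" "v \<noteq> 0\<^sub>v n" and Lv: "?L *\<^sub>v v = 0 \<cdot>\<^sub>v v"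
      unfolding eigenvalue_def eigenvector_def using Lc by auto
    have "(?L *\<^sub>v v) $ 0 = (\<Sum>k<n. ?L $$ (0,k) * v $ k)" using mult_vec_entry[OF Lc v(1)] n by simp
    also have "\<dots> = v $ 0" using n L_entry[OF sg, of 0 0] E_irr[OF sg] by simp
    finally have "v $ 0 = 0" using Lv v n by simp
    then have "v = 0\<^sub>v n" using v n by (auto simp: vec_eq_iff)
    then show False using v by simp
  qed
  have n0: "0 < n" using n2 by simp
  have Lsym: "\<And>i j. i<n \<Longrightarrow> j<n \<Longrightarrow> ?L$$(i,j) = ?L$$(j,i)" using L_sym[OF sg] .
  have P0: "char_matrix ?L 0 * (char_matrix ?L \<alpha> * char_matrix ?L \<beta>) = 0\<^sub>m n n"
    by (rule sym_poly_zero[OF Lc Lsym]) (auto simp: evs)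
  define l where "l i j = ?L $$ (i,j)" for i j
  define mm where "mm i j = (\<Sum>k<n. l i k * l k j) - (\<alpha>+\<beta>) * l i j + (if i = j then \<alpha>*\<beta> else 0)" for i j
  have cm: "char_matrix ?L e $$ (i,j) = l i j - (if i = j then e else 0)" if "i<n" "j<n" for e i j
    using that Lc unfolding l_def char_matrix_def by simp
  have cmc: "char_matrix ?L e \<in> carrier_mat n n" for e using Lc by simp
  have Mentry: "(char_matrix ?L \<alpha> * char_matrix ?L \<beta>) $$ (i,j) = mm i j" if i: "i<n" and j: "j<n" for i j
  proof -
    have "(char_matrix ?L \<alpha> * char_matrix ?L \<beta>) $$ (i,j) = (\<Sum>k<n. (l i k - (if i = k then \<alpha> else 0)) * (l k j - (if k = j then \<beta> else 0)))"
      using prod_entry[OF cmc cmc i j] i j by (auto simp: cm intro!: sum.cong)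
    also have "\<dots> = (\<Sum>k<n. l i k * l k j - (if k = j then \<beta> * l i j else 0) - (if k = i then \<alpha> * l i j else 0) + (if k = i then (if i = j then \<alpha>*\<beta> else 0) else 0))"
      by (rule sum.cong[OF refl]) (auto simp: algebra_simps)
    also have "\<dots> = mm i j" using i j unfolding mm_def by (simp add: sum.distrib sum_subtractf algebra_simps)
    finally show ?thesis .
  qed
  have zero: "(\<Sum>k<n. l i k * mm k j) = 0" if i: "i<n" and j: "j<n" for i j
  proof -
    have "(char_matrix ?L 0 * (char_matrix ?L \<alpha> * char_matrix ?L \<beta>)) $$ (i,j) = 0" using P0 i j by simp
    moreover have "(char_matrix ?L 0 * (char_matrix ?L \<alpha> * char_matrix ?L \<beta>)) $$ (i,j) = (\<Sum>k<n. l i k * mm k j)"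
      using prod_entry[OF cmc mult_carrier_mat[OF cmc cmc] i j] i j by (auto simp: cm Mentry intro!: sum.cong)
    ultimately show ?thesis by simp
  qed
  have col: "\<exists>c. \<forall>i<n. mm i j = c * sq n E i" if j: "j < n" for j
    using kernel[OF sg con n2, of "\<lambda>k. mm k j"] zero j unfolding l_def by simp
  have "\<forall>j. \<exists>c. j < n \<longrightarrow> (\<forall>i<n. mm i j = c * sq n E i)" using col by blast
  from choice[OF this] obtain cf where cf0: "\<forall>j. j < n \<longrightarrow> (\<forall>i<n. mm i j = cf j * sq n E i)" by blast
  have mmsym: "mm i j = mm j i" if ij: "i<n" "j<n" for i j
  proof -
    have "(\<Sum>k<n. l i k * l k j) = (\<Sum>k<n. l j k * l k i)"
    proof (rule sum.cong[OF refl])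
      fix k assume "k \<in> {..<n}" then have k: "k<n" by simp
      show "l i k * l k j = l j k * l k i" using Lsym[OF ij(1) k] Lsym[OF k ij(2)] unfolding l_def by (simp add: mult.commute)
    qed
    then show ?thesis unfolding mm_def using Lsym[OF ij] by (auto simp: l_def)
  qed
  have sp: "sq n E i > 0" if "i < n" for i using sq_pos[OF sg con n2 that] .
  define \<kappa> where "\<kappa> = cf 0 / sq n E 0"
  have mmk: "mm i j = \<kappa> * sq n E i * sq n E j" if i: "i<n" and j: "j<n" for i j
  proof -
    have "cf j * sq n E 0 = mm 0 j" using cf0 j n0 by simp
    also have "\<dots> = mm j 0" using mmsym j n0 by simp
    also have "\<dots> = cf 0 * sq n E j" using cf0 j n0 by simp
    finally have "cf j = \<kappa> * sq n E j" unfolding \<kappa>_def using sp[OF n0] by (simp add: field_simps)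
    then show ?thesis using cf0 i j by (simp add: mult_ac)
  qed
  have Lwl: "(\<Sum>k<n. l i k * sq n E k) = 0" if "i<n" for i using Lw[OF sg con n2 that] unfolding l_def .
  have kap: "\<kappa> * (2 * real (num_edges n E)) = \<alpha> * \<beta>"
  proof -
    have A1: "(\<Sum>j<n. (\<Sum>k<n. l 0 k * l k j) * sq n E j) = 0"
    proof -
      have "(\<Sum>j<n. (\<Sum>k<n. l 0 k * l k j) * sq n E j) = (\<Sum>j<n. \<Sum>k<n. l 0 k * l k j * sq n E j)" by (simp add: sum_distrib_right)
      also have "\<dots> = (\<Sum>k<n. \<Sum>j<n. l 0 k * l k j * sq n E j)" by (rule sum.swap)
      also have "\<dots> = (\<Sum>k<n. l 0 k * (\<Sum>j<n. l k j * sq n E j))" by (simp add: sum_distrib_left mult_ac)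
      also have "\<dots> = 0" by (rule sum.neutral) (simp add: Lwl)
      finally show ?thesis .
    qed
    have "(\<Sum>j<n. mm 0 j * sq n E j) = (\<Sum>j<n. (\<Sum>k<n. l 0 k * l k j) * sq n E j - (\<alpha>+\<beta>) * (l 0 j * sq n E j) + (if j = 0 then \<alpha>*\<beta>*sq n E 0 else 0))"
      unfolding mm_def by (rule sum.cong[OF refl]) (auto simp: algebra_simps)
    also have "\<dots> = (\<Sum>j<n. (\<Sum>k<n. l 0 k * l k j) * sq n E j) - (\<alpha>+\<beta>) * (\<Sum>j<n. l 0 j * sq n E j) + \<alpha>*\<beta>*sq n E 0"
      using n0 by (simp add: sum.distrib sum_subtractf sum_distrib_left)
    also have "\<dots> = \<alpha>*\<beta>*sq n E 0" using A1 Lwl[OF n0] by simp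
    finally have e1: "(\<Sum>j<n. mm 0 j * sq n E j) = \<alpha>*\<beta>*sq n E 0" .
    have "(\<Sum>j<n. mm 0 j * sq n E j) = (\<Sum>j<n. \<kappa> * sq n E 0 * real (degree n E j))"
      by (rule sum.cong[OF refl]) (simp add: mmk n0 mult.assoc sq_sq)
    also have "\<dots> = \<kappa> * sq n E 0 * (2 * real (num_edges n E))"
      by (simp add: sum_distrib_left[symmetric] handshake[OF sg])
    finally have "\<kappa> * sq n E 0 * (2 * real (num_edges n E)) = \<alpha>*\<beta>*sq n E 0" using e1 by linarith
    then have "(\<kappa> * (2 * real (num_edges n E))) * sq n E 0 = (\<alpha>*\<beta>) * sq n E 0" by (simp add: mult_ac)
    then show ?thesis using sp[OF n0] mult_right_cancel[of "sq n E 0"] by (metis less_irrefl)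
  qed
  have ab: "\<alpha> * \<beta> > 0" using assms(6,7) by simp
  have mpos: "real (num_edges n E) > 0"
  proof -
    have "num_edges n E \<noteq> 0"
    proof
      assume "num_edges n E = 0"
      then have "\<alpha> * \<beta> = 0" using kap by simp
      with ab show False by linarith
    qed
    then show ?thesis by simp
  qed
  have kp: "0 < \<kappa> * (2 * real (num_edges n E))" using kap ab by simp
  have "0 < 2 * real (num_edges n E)" using mpos by simp
  from zero_less_mult_pos2[OF kp this] have kpos: "\<kappa> > 0" .
  define d where "d u = real (degree n E u)" for u
  have dpos: "d u > 0" if "u < n" for u using deg_pos[OF sg con n2 that] unfolding d_def by simp
  have dsq: "sq n E u * sq n E u = d u" for u unfolding d_def by (rule sq_sq)
  define p where "p = (1-\<alpha>)*(1-\<beta>)"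
  define X where "X = 2 * real (num_edges n E) * (\<alpha> - 1) * (\<beta> - 1) / (\<alpha> * \<beta>)"
  have Xk: "X * \<kappa> = p"
  proof -
    have pe: "(\<alpha> - 1) * (\<beta> - 1) = p" unfolding p_def by (simp add: algebra_simps)
    have "X * \<kappa> = (\<kappa> * (2 * real (num_edges n E))) * ((\<alpha> - 1) * (\<beta> - 1)) / (\<alpha> * \<beta>)"
      unfolding X_def by (simp add: mult_ac)
    then have "X * \<kappa> = (\<alpha> * \<beta>) * p / (\<alpha> * \<beta>)" using kap pe by simp
    moreover have "\<alpha> \<noteq> 0" "\<beta> \<noteq> 0" using assms(6,7) by auto
    ultimately show ?thesis by simp
  qed
  have offd: "TT n E u v = \<kappa> * d u * d v" if u: "u<n" and v: "v<n" and uv: "u \<noteq> v" and ne: "\<not> E u v" for u v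
  proof -
    have "mm u v = TT n E u v / (sq n E u * sq n E v)"
      unfolding mm_def l_def using L2_entry[OF sg u v] L_entry[OF sg u v] uv ne by simp
    then have "TT n E u v / (sq n E u * sq n E v) = \<kappa> * sq n E u * sq n E v" using mmk[OF u v] by simp
    then have "TT n E u v = \<kappa> * (sq n E u * sq n E u) * (sq n E v * sq n E v)"
      using sp[OF u] sp[OF v] by (simp add: field_simps)
    then show ?thesis by (simp only: dsq)
  qed
  have diag: "TT n E u u = d u * (\<kappa> * d u - p)" if u: "u<n" for u
  proof -
    have "mm u u = 1 + TT n E u u / d u - (\<alpha>+\<beta>) + \<alpha>*\<beta>"
      unfolding mm_def l_def using L2_entry[OF sg u u] L_entry[OF sg u u] E_irr[OF sg] dsq[of u] by simp
    then have "1 + TT n E u u / d u - (\<alpha>+\<beta>) + \<alpha>*\<beta> = \<kappa> * d u" using mmk[OF u u] dsq[of u] by (simp add: mult.assoc)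
    moreover have "p = 1 - \<alpha> - \<beta> + \<alpha>*\<beta>" unfolding p_def by (simp add: algebra_simps)
    ultimately have "TT n E u u / d u = \<kappa> * d u - p" by linarith
    then have "TT n E u u = (\<kappa> * d u - p) * d u" using dpos[OF u] by (simp add: divide_eq_eq)
    then show ?thesis by (simp add: mult.commute)
  qed
  have TTle: "TT n E u v \<le> TT n E u u" for u v
    unfolding TT_def by (rule sum_mono) (auto simp: nbhd_def E_sym[OF sg])
  have half: "X \<le> d u - d v" if u: "u<n" and v: "v<n" and uv: "u \<noteq> v" and ne: "\<not> E u v" for u v
  proof -
    have "\<kappa> * d u * d v \<le> d u * (\<kappa> * d u - p)" using offd[OF u v uv ne] diag[OF u] TTle[of u v] by simp
    then have "d u * (\<kappa> * d v) \<le> d u * (\<kappa> * d u - p)" by (simp add: mult_ac)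
    then have "\<kappa> * d v \<le> \<kappa> * d u - p" using dpos[OF u] by (simp add: mult_le_cancel_left_pos)
    then have "p \<le> \<kappa> * (d u - d v)" unfolding right_diff_distrib by linarith
    then have "X * \<kappa> \<le> (d u - d v) * \<kappa>" using Xk by (simp add: mult.commute)
    then show ?thesis using kpos by (simp add: mult_le_cancel_right_pos)
  qed
  have key: "X \<le> d u - d v \<and> d u - d v \<le> - X" if u: "u<n" and v: "v<n" and uv: "u \<noteq> v" and ne: "\<not> E u v" for u v
  proof -
    have ne': "\<not> E v u" using ne E_sym[OF sg] by blast
    show ?thesis using half[OF u v uv ne] half[OF v u uv[symmetric] ne'] by linarith
  qed
  have b1: "\<beta> \<le> 1"
  proof (rule ccontr)
    assume "\<not> \<beta> \<le> 1" then have b: "\<beta> > 1" by simp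
    then have a: "\<alpha> > 1" using assms(6) by simp
    have Xpos: "X > 0" unfolding X_def using a b mpos ab by (intro divide_pos_pos mult_pos_pos) auto
    show False
    proof (cases "\<exists>u<n. \<exists>v<n. u \<noteq> v \<and> \<not> E u v")
      case True
      then obtain u v where "u<n" "v<n" "u \<noteq> v" "\<not> E u v" by blast
      from key[OF this] Xpos show False by linarith
    next
      case False then have comp: "\<forall>u<n. \<forall>v<n. u \<noteq> v \<longrightarrow> E u v" by blast
      have "\<alpha> = 1 + 1 / (real n - 1)" by (rule complete_ev[OF sg con n2 comp]) (use assms(6,7) in \<open>auto simp: evs\<close>)
      moreover have "\<beta> = 1 + 1 / (real n - 1)" by (rule complete_ev[OF sg con n2 comp]) (use assms(6,7) in \<open>auto simp: evs\<close>)
      ultimately show False using assms(6) by simp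
    qed
  qed
  show ?thesis
  proof (cases "\<beta> = 1")
    case True
    have X0: "X = 0" unfolding X_def using True by simp
    have p0: "p = 0" unfolding p_def using True by simp
    have sub: "nbhd n E u \<subseteq> nbhd n E v" if u: "u<n" and v: "v<n" and uv: "u \<noteq> v" and ne: "\<not> E u v" for u v
    proof
      fix k assume k: "k \<in> nbhd n E u"
      have duv: "d u = d v" using key[OF u v uv ne] X0 by linarith
      have "TT n E u u - TT n E u v = 0" using offd[OF u v uv ne] diag[OF u] duv p0 by (simp add: algebra_simps)
      moreover have "TT n E u u - TT n E u v = (\<Sum>j\<in>nbhd n E u. (if E j u then 1 / real (degree n E j) else 0) - (if E j v then 1 / real (degree n E j) else 0))"
        unfolding TT_def by (simp add: sum_subtractf)
      ultimately have s0: "(\<Sum>j\<in>nbhd n E u. (if E j u then 1 / real (degree n E j) else 0) - (if E j v then 1 / real (degree n E j) else 0)) = 0" by simp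
      have nn: "0 \<le> (if E j u then 1 / real (degree n E j) else 0) - (if E j v then 1 / real (degree n E j) else 0)"
        if "j \<in> nbhd n E u" for j using that by (auto simp: nbhd_def E_sym[OF sg])
      have "(if E k u then 1 / real (degree n E k) else 0) - (if E k v then 1 / real (degree n E k) else 0) = 0"
        using sum_nonneg_eq_0_iff[of "nbhd n E u" "\<lambda>j. (if E j u then 1 / real (degree n E j) else 0) - (if E j v then 1 / real (degree n E j) else 0)"] nbhd_fin[OF sg] nn s0 k by blast
      moreover have "E k u" using k E_sym[OF sg] by (auto simp: nbhd_def)
      moreover have "degree n E k > 0" using deg_pos_nb[OF sg k] .
      ultimately have "E k v" by (auto split: if_splits)
      then show "k \<in> nbhd n E v" using E_sym[OF sg] E_bound[OF sg] by (auto simp: nbhd_def)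
    qed
    have "\<forall>u<n. \<forall>v<n. u \<noteq> v \<and> \<not> E u v \<longrightarrow> nbhd n E u = nbhd n E v"
    proof (intro allI impI)
      fix u v assume u: "u < n" and v: "v < n" and h: "u \<noteq> v \<and> \<not> E u v"
      have ne': "\<not> E v u" using h E_sym[OF sg] by blast
      have "nbhd n E u \<subseteq> nbhd n E v" using sub[OF u v] h by blast
      moreover have "nbhd n E v \<subseteq> nbhd n E u" using sub[OF v u] h ne' by auto
      ultimately show "nbhd n E u = nbhd n E v" by (rule subset_antisym)
    qed
    then show ?thesis using True by simp
  next
    case False
    then have "\<beta> < 1" using b1 by simp
    moreover have "\<forall>u<n. \<forall>v<n. u \<noteq> v \<and> \<not> E u v \<longrightarrow>
        - X \<ge> real (degree n E u) - real (degree n E v) \<and> real (degree n E u) - real (degree n E v) \<ge> X"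
      using key unfolding d_def by blast
    ultimately show ?thesis using b1 unfolding X_def by blast
  qed
qed


end
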